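(* Let $k$ be a positive integer. The polynomial $P_k(1,\beta,0)\in\mathbb Q[\beta]$ has degree $\le\left\lfloor\frac{k^2}4\right\rfloor$.
   Context: Define $\widetilde c_n\in\mathbb Q[\beta]$ by $\widetilde c_0=2$, $\widetilde c_1=1$, $(n+1)\widetilde c_{n+1}=\widetilde c_n+\frac\beta4(n-1)\widetilde c_{n-1}$ for $n\ge1$, and $\widetilde c_n=0$ for $n<0$. $P_k(1,\beta,0)$ is the $k\times k$ determinant with $(j,l)$ entry $\widetilde c_{k-2(j-1)+(l-1)}$, $1\le j,l\le k$. *)

theory Defs
  imports "HOL-Computational_Algebra.Polynomial" "Jordan_Normal_Form.Determinant"
begin

(* c~_n for n >= 0, as polynomials in beta over Q:
   c~_0 = 2, c~_1 = 1, (n+1) c~_{n+1} = c~_n + (beta/4)(n-1) c~_{n-1} for n >= 1.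
   Written with n+1 in place of n: c~_{n+2} = (c~_{n+1} + (beta/4) n c~_n) / (n+2). *)
fun ctilde_nat :: "nat \<Rightarrow> rat poly" where
  "ctilde_nat 0 = [:2:]"
| "ctilde_nat (Suc 0) = [:1:]"
| "ctilde_nat (Suc (Suc n)) =
     smult (1 / of_nat (n + 2)) (ctilde_nat (Suc n) + smult (of_nat n / 4) [:0, 1:] * ctilde_nat n)"

definition ctilde :: "int \<Rightarrow> rat poly" where
  "ctilde i = (if i < 0 then 0 else ctilde_nat (nat i))"

(* P_k(1,beta,0): k x k determinant with (j,l) entry c~_{k-2(j-1)+(l-1)}, 1 <= j,l <= k;
   here with 0-based indices i = j-1, m = l-1 *)
definition P_k :: "nat \<Rightarrow> rat poly" where
  "P_k k = det (mat k k (\<lambda>(i, m). ctilde (int k - 2 * int i + int m)))"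

end

theory Submission
  imports Defs
begin

lemma deg_ctilde_nat: "degree (ctilde_nat n) \<le> n div 2"
proof (induction n rule: ctilde_nat.induct)
  case 1 then show ?case by simp
next
  case 2 then show ?case by simp
next
  case (3 n)
  have a: "degree (smult (of_nat n / 4) [:0, 1:] * ctilde_nat n) \<le> Suc (Suc n) div 2"
  proof -
    have "degree (smult (of_nat n / 4) [:0, 1:] * ctilde_nat n) \<le> degree (smult (of_nat n / 4) [:0, 1::rat:]) + degree (ctilde_nat n)"
      by (rule degree_mult_le)
    also have "\<dots> \<le> 1 + n div 2" using 3(2) by (simp add: degree_smult_le)
    finally show ?thesis by simp
  qed
  have b: "degree (ctilde_nat (Suc n)) \<le> Suc (Suc n) div 2" using 3(1) by simp
  have "degree (ctilde_nat (Suc (Suc n))) \<le> degree (ctilde_nat (Suc n) + smult (of_nat n / 4) [:0, 1:] * ctilde_nat n)"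
    by (simp add: degree_smult_le)
  also have "\<dots> \<le> Suc (Suc n) div 2" using a b by (simp add: degree_add_le)
  finally show ?case .
qed

lemma sum_half: "(\<Sum>m<k. Suc m div 2) = k^2 div 4"
proof (induction k)
  case 0 then show ?case by simp
next
  case (Suc k)
  have "k^2 div 4 + Suc k div 2 = (Suc k)^2 div 4"
  proof (cases "even k")
    case True then obtain a where "k = 2*a" by blast
    then show ?thesis by (simp add: power2_eq_square algebra_simps)
  next
    case False then obtain a where "k = 2*a+1" using oddE by blast
    then show ?thesis by (simp add: power2_eq_square algebra_simps)
  qed
  then show ?case using Suc by simp
qed

lemma comb:
  fixes p :: "nat \<Rightarrow> nat"
  assumes p: "p permutes {0..<k}" and nn: "\<And>i. i < k \<Longrightarrow> 2*i \<le> k + p i"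
  shows "(\<Sum>i<k. (k + p i - 2*i) div 2) \<le> k^2 div 4"
proof -
  have e1: "int (\<Sum>i<k. (k + p i - 2*i) div 2) = (\<Sum>i<k. int ((k + p i) div 2) - int i)"
    unfolding of_nat_sum
  proof (rule sum.cong)
    fix i assume "i \<in> {..<k}"
    then have "2*i \<le> k + p i" using nn by simp
    then have "(k + p i - 2*i) div 2 = (k + p i) div 2 - i" by linarith
    moreover have "i \<le> (k + p i) div 2" using \<open>2*i \<le> k + p i\<close> by linarith
    ultimately show "int ((k + p i - 2*i) div 2) = int ((k + p i) div 2) - int i" by simp
  qed simp
  have r: "(\<Sum>i<k. int ((k + p i) div 2)) = (\<Sum>m<k. int ((k + m) div 2))"
  proof -
    have "(\<Sum>i\<in>{0..<k}. int ((k + p i) div 2)) = (\<Sum>m\<in>{0..<k}. int ((k + m) div 2))"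
      using sum.permute[OF p, of "\<lambda>m. int ((k + m) div 2)"] by (simp add: comp_def)
    then show ?thesis by (simp add: atLeast0LessThan)
  qed
  have e2: "(\<Sum>i<k. int ((k + p i) div 2) - int i) = (\<Sum>m<k. int ((k + m) div 2) - int m)"
    by (simp add: sum_subtractf r)
  have e3: "(\<Sum>m<k. int ((k + m) div 2) - int m) = int (\<Sum>m<k. (k - m) div 2)"
    unfolding of_nat_sum
  proof (rule sum.cong)
    fix m assume "m \<in> {..<k}"
    then have "m < k" by simp
    then have "(k + m) div 2 = (k - m) div 2 + m" by presburger
    then show "int ((k + m) div 2) - int m = int ((k - m) div 2)" by simp
  qed simp
  have e4: "(\<Sum>m<k. (k - m) div 2) = (\<Sum>m<k. Suc m div 2)"
    using sum.nat_diff_reindex[of "\<lambda>m. Suc m div 2" k]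
    by (metis (no_types, lifting) Suc_diff_Suc lessThan_iff sum.cong)
  have "int (\<Sum>i<k. (k + p i - 2*i) div 2) = int (k^2 div 4)"
    using e1 e2 e3 e4 sum_half by simp
  then show ?thesis by (metis of_nat_eq_iff order_refl)
qed

theorem lemma4p7:
  fixes k :: nat
  assumes "k > 0"
  shows "degree (P_k k) \<le> k ^ 2 div 4"
proof -
  let ?A = "mat k k (\<lambda>(i, m). ctilde (int k - 2 * int i + int m))"
  have "P_k k = (\<Sum> p \<in> {p. p permutes {0 ..< k}}. signof p * (\<Prod> i = 0 ..< k. ?A $$ (i, p i)))"
    unfolding P_k_def det_def by simp
  also have "degree \<dots> \<le> k ^ 2 div 4"
  proof (rule degree_sum_le)
    show "finite {p. p permutes {0 ..< k}}" by (simp add: finite_permutations)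
  next
    fix p assume "p \<in> {p. p permutes {0 ..< k}}"
    then have p: "p permutes {0..<k}" by simp
    have pk: "\<And>i. i < k \<Longrightarrow> p i < k" using p permutes_in_image by fastforce
    have ent: "\<And>i. i < k \<Longrightarrow> ?A $$ (i, p i) = ctilde (int k - 2 * int i + int (p i))"
      using pk by simp
    have dprod: "degree (\<Prod> i = 0 ..< k. ?A $$ (i, p i)) \<le> k ^ 2 div 4"
    proof (cases "\<forall>i<k. 2*i \<le> k + p i")
      case False
      then obtain i where i: "i < k" "\<not> 2*i \<le> k + p i" by blast
      have "?A $$ (i, p i) = 0" using ent[OF i(1)] i(2) by (simp add: ctilde_def)
      have "(\<Prod> i = 0 ..< k. ?A $$ (i, p i)) = 0"
        by (rule prod_zero) (use i(1) \<open>?A $$ (i, p i) = 0\<close> in auto)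
      then show ?thesis by (metis degree_0 zero_le)
    next
      case True
      have "degree (\<Prod> i = 0 ..< k. ?A $$ (i, p i)) \<le> sum (degree \<circ> (\<lambda>i. ?A $$ (i, p i))) {0..<k}"
        by (rule degree_prod_sum_le) simp
      also have "\<dots> \<le> (\<Sum>i\<in>{0..<k}. (k + p i - 2*i) div 2)"
      proof (rule sum_mono)
        fix i assume "i \<in> {0..<k}"
        then have i: "i < k" by simp
        have "int k - 2 * int i + int (p i) = int (k + p i - 2*i)" using True i by simp
        then have "?A $$ (i, p i) = ctilde (int (k + p i - 2*i))"
          using ent[OF i] by simp
        then have "?A $$ (i, p i) = ctilde_nat (k + p i - 2*i)"
          by (simp only: ctilde_def nat_int) simp
        then show "(degree \<circ> (\<lambda>i. ?A $$ (i, p i))) i \<le> (k + p i - 2*i) div 2"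
          using deg_ctilde_nat by simp
      qed
      also have "\<dots> \<le> k^2 div 4" using comb[OF p] True by (simp add: atLeast0LessThan)
      finally show ?thesis .
    qed
    have "degree (signof p * (\<Prod> i = 0 ..< k. ?A $$ (i, p i))) \<le> degree (signof p :: rat poly) + degree (\<Prod> i = 0 ..< k. ?A $$ (i, p i))"
      by (rule degree_mult_le)
    also have "degree (signof p :: rat poly) = 0" by (simp add: sign_def)
    finally show "degree (signof p * (\<Prod> i = 0 ..< k. ?A $$ (i, p i))) \<le> k ^ 2 div 4"
      using dprod by simp
  qed
  finally show ?thesis .
qed

end
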